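(* Let $\alpha,\beta,\Delta\in\mathbb{C}$. The conformal $\widetilde{\mathrm{SV}}$-module $V(\alpha,\beta,\Delta)$ is irreducible if and only if $\Delta\neq0$ or $\beta\neq0$.
   Context: A conformal module over a Lie conformal algebra $R$ is a $\mathbb{C}[\partial]$-module $V$ with $a\mapsto a_\lambda\in\mathrm{End}_{\mathbb{C}}(V)\otimes\mathbb{C}[\lambda]$ satisfying $[a_\lambda,b_\mu]=[a_\lambda b]_{\lambda+\mu}$ and $(\partial a)_\lambda=[\partial,a_\lambda]=-\lambda a_\lambda$; it is irreducible if it has no nonzero proper submodule ($\mathbb{C}[\partial]$-submodule stable under all $a_\lambda$). $\widetilde{\mathrm{SV}}$ is the Lie conformal algebra that is the free $\mathbb{C}[\partial]$-module with basis $L,M,Y,N$ whose nonzero $\lambda$-brackets (up to skew-symmetry) are $[L_\lambda L]=(\partial+2\lambda)L$, $[L_\lambda Y]=(\partial+\tfrac32\lambda)Y$, $[L_\lambda M]=(\partial+\lambda)M$, $[Y_\lambda Y]=(\partial+2\lambda)M$, $[L_\lambda N]=(\partial+\lambda)N$, $[N_\lambda M]=2M$, $[N_\lambda Y]=Y$. $V(\alpha,\beta,\Delta)=\mathbb{C}[\partial]v_\Delta$ is the free rank-one module with $L_\lambda v_\Delta=(\partial+\alpha+\Delta\lambda)v_\Delta$, $N_\lambda v_\Delta=\beta v_\Delta$, $M_\lambda v_\Delta=Y_\lambda v_\Delta=0$. *)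

theory Defs
  imports "HOL-Computational_Algebra.Polynomial"
begin

text \<open>
  The module V(alpha,beta,Delta) = C[d] v is modelled by the type complex poly:
  the polynomial p stands for p(d) v.  A lambda-polynomial with values in V,
  i.e. an element of V[lambda], is modelled by complex poly poly: the outer
  variable is lambda, the coefficients are elements of V = C[d].
\<close>

text \<open>Elements of SV~ = C[d]L + C[d]M + C[d]Y + C[d]N, given by their four
  coefficient polynomials (for L, M, Y, N respectively).\<close>
type_synonym sv_elem = "complex poly \<times> complex poly \<times> complex poly \<times> complex poly"

text \<open>p(d + lambda) as an element of C[d][lambda].\<close>
definition shift_poly :: "complex poly \<Rightarrow> complex poly poly" where
  "shift_poly p = poly (map_poly (\<lambda>c. [:[:c:]:]) p) [:[:0, 1:], 1:]"

definition neg_lam :: "complex poly \<Rightarrow> complex poly poly" where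
  "neg_lam q = map_poly (\<lambda>c. [:c:]) (q \<circ>\<^sub>p [:0, -1:])"

text \<open>Action of the basis elements on p(d) v, using a_lambda (p(d) v) = p(d+lambda) a_lambda v:
  L_lambda v = (d + alpha + Delta lambda) v, N_lambda v = beta v, M_lambda v = Y_lambda v = 0.\<close>
definition act_L :: "complex \<Rightarrow> complex \<Rightarrow> complex poly \<Rightarrow> complex poly poly" where
  "act_L \<alpha> \<Delta> p = shift_poly p * [:[:\<alpha>, 1:], [:\<Delta>:]:]"

definition act_N :: "complex \<Rightarrow> complex poly \<Rightarrow> complex poly poly" where
  "act_N \<beta> p = shift_poly p * [:[:\<beta>:]:]"

text \<open>Action of a general element a = q1(d)L + q2(d)M + q3(d)Y + q4(d)N, using
  (q(d) a)_lambda = q(-lambda) a_lambda.\<close>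
definition act_V :: "complex \<Rightarrow> complex \<Rightarrow> complex \<Rightarrow> sv_elem \<Rightarrow> complex poly \<Rightarrow> complex poly poly" where
  "act_V \<alpha> \<beta> \<Delta> a p =
     (case a of (qL, qM, qY, qN) \<Rightarrow>
        neg_lam qL * act_L \<alpha> \<Delta> p + neg_lam qM * 0 + neg_lam qY * 0 + neg_lam qN * act_N \<beta> p)"

definition is_submodule_V :: "complex \<Rightarrow> complex \<Rightarrow> complex \<Rightarrow> complex poly set \<Rightarrow> bool" where
  "is_submodule_V \<alpha> \<beta> \<Delta> W \<longleftrightarrow>
     0 \<in> W \<and> (\<forall>u\<in>W. \<forall>w\<in>W. u + w \<in> W) \<and> (\<forall>q. \<forall>w\<in>W. q * w \<in> W) \<and>
     (\<forall>a w k. w \<in> W \<longrightarrow> coeff (act_V \<alpha> \<beta> \<Delta> a w) k \<in> W)"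

definition irreducible_V :: "complex \<Rightarrow> complex \<Rightarrow> complex \<Rightarrow> bool" where
  "irreducible_V \<alpha> \<beta> \<Delta> \<longleftrightarrow>
     (\<forall>W. is_submodule_V \<alpha> \<beta> \<Delta> W \<longrightarrow> W = {0} \<or> W = UNIV)"

end

theory Submission
  imports Defs
begin

lemma shift_pCons:
  "shift_poly (pCons a p) = [:[:a:]:] + [:[:0, 1:], 1:] * shift_poly p"
  unfolding shift_poly_def by (simp add: map_poly_pCons)

lemma shift_0: "shift_poly 0 = 0"
  unfolding shift_poly_def by simp

lemma shift_props:
  "degree (shift_poly p) \<le> degree p \<and> coeff (shift_poly p) (degree p) = [:lead_coeff p:]"
proof (induction p rule: pCons_induct)
  case 0
  then show ?case by (simp add: shift_0)
next
  case (pCons a p)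
  show ?case
  proof (cases "p = 0")
    case True
    then show ?thesis by (simp add: shift_pCons shift_0)
  next
    case False
    let ?S = "shift_poly p"
    let ?X = "[:[:0, 1:], 1:] :: complex poly poly"
    have dS: "degree ?S = degree p"
      using pCons.IH False
      by (metis le_antisym le_degree leading_coeff_0_iff pCons_eq_0_iff)
    have dX: "degree ?X = 1" by simp
    have dXS: "degree (?X * ?S) \<le> degree p + 1"
      using degree_mult_le[of ?X ?S] dS dX by simp
    have cXS: "coeff (?X * ?S) (degree p + 1) = [:lead_coeff p:]"
      using coeff_mult_degree_sum[of ?X ?S] dS dX pCons.IH by simp
    have deg: "degree (pCons a p) = degree p + 1" using False by simp
    have d1: "degree ([:[:a:]:] + ?X * ?S) \<le> degree p + 1"
      proof -
      have "degree [:[:a:]:] \<le> degree p + 1" by simp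
      from degree_add_le[OF this dXS] show ?thesis .
    qed
    show ?thesis
      using d1 cXS deg by (simp add: shift_pCons)
  qed
qed

lemma neg_lam_0: "neg_lam 0 = 0" unfolding neg_lam_def by simp
lemma neg_lam_1: "neg_lam 1 = 1" unfolding neg_lam_def by (simp add: one_pCons map_poly_pCons)

lemma one_in:
  assumes sub: "is_submodule_V \<alpha> \<beta> \<Delta> W" and w: "w \<in> W" "w \<noteq> 0" and nz: "\<Delta> \<noteq> 0 \<or> \<beta> \<noteq> 0"
  shows "1 \<in> W"
proof -
  let ?n = "degree w"
  have clos: "\<And>a k. coeff (act_V \<alpha> \<beta> \<Delta> a w) k \<in> W" using sub w unfolding is_submodule_V_def by blast
  have mul: "\<And>q x. x \<in> W \<Longrightarrow> q * x \<in> W" using sub unfolding is_submodule_V_def by blast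
  have sp: "degree (shift_poly w) \<le> ?n" "coeff (shift_poly w) ?n = [:lead_coeff w:]"
    using shift_props[of w] by auto
  have lc: "lead_coeff w \<noteq> 0" using w by simp
  obtain c where c: "c \<noteq> 0" "[:c:] \<in> W"
  proof (cases "\<beta> \<noteq> 0")
    case True
    have "act_V \<alpha> \<beta> \<Delta> (0,0,0,1) w = shift_poly w * [:[:\<beta>:]:]"
      by (simp add: act_V_def neg_lam_0 neg_lam_1 act_N_def)
    also have "\<dots> = smult [:\<beta>:] (shift_poly w)" by (simp add: mult.commute)
    finally have "coeff (act_V \<alpha> \<beta> \<Delta> (0,0,0,1) w) ?n = [:\<beta> * lead_coeff w:]"
      using sp by simp
    then have "[:\<beta> * lead_coeff w:] \<in> W" using clos by metis
    then show ?thesis by (intro that[of "\<beta> * lead_coeff w"]) (use True lc in auto)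
  next
    case False
    then have D: "\<Delta> \<noteq> 0" using nz by simp
    have "act_V \<alpha> \<beta> \<Delta> (1,0,0,0) w = shift_poly w * [:[:\<alpha>, 1:], [:\<Delta>:]:]"
      by (simp add: act_V_def neg_lam_0 neg_lam_1 act_L_def)
    also have "\<dots> = smult [:\<alpha>, 1:] (shift_poly w) + pCons 0 (smult [:\<Delta>:] (shift_poly w))"
      by (simp add: mult_pCons_right mult.commute)
    finally have "coeff (act_V \<alpha> \<beta> \<Delta> (1,0,0,0) w) (Suc ?n) = [:\<Delta> * lead_coeff w:]"
      using sp by (simp add: coeff_eq_0)
    then have "[:\<Delta> * lead_coeff w:] \<in> W" using clos by metis
    then show ?thesis by (intro that[of "\<Delta> * lead_coeff w"]) (use D lc in auto)
  qed
  have "[:1/c:] * [:c:] \<in> W" using mul c by blast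
  then show ?thesis using c by (simp add: one_pCons map_poly_pCons)
qed

theorem proposition4p1:
  fixes \<alpha> \<beta> \<Delta> :: complex
  shows "irreducible_V \<alpha> \<beta> \<Delta> \<longleftrightarrow> (\<Delta> \<noteq> 0 \<or> \<beta> \<noteq> 0)"
proof
  assume irr: "irreducible_V \<alpha> \<beta> \<Delta>"
  show "\<Delta> \<noteq> 0 \<or> \<beta> \<noteq> 0"
  proof (rule ccontr)
    assume "\<not> (\<Delta> \<noteq> 0 \<or> \<beta> \<noteq> 0)"
    then have z: "\<Delta> = 0" "\<beta> = 0" by auto
    define W where "W = {q * [:\<alpha>, 1:] | q. True}"
    have sub: "is_submodule_V \<alpha> \<beta> \<Delta> W"
      unfolding is_submodule_V_def
    proof (intro conjI allI ballI impI)
      show "0 \<in> W" unfolding W_def by (auto intro: exI[of _ 0])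
    next
      fix u w assume "u \<in> W" "w \<in> W"
      then obtain q1 q2 where "u = q1 * [:\<alpha>, 1:]" "w = q2 * [:\<alpha>, 1:]" unfolding W_def by blast
      then have "u + w = (q1 + q2) * [:\<alpha>, 1:]" by (simp only: distrib_right)
      then show "u + w \<in> W" unfolding W_def by blast
    next
      fix q w assume "w \<in> W"
      then obtain q1 where "w = q1 * [:\<alpha>, 1:]" unfolding W_def by blast
      then have "q * w = (q * q1) * [:\<alpha>, 1:]" by (simp only: mult.assoc)
      then show "q * w \<in> W" unfolding W_def by blast
    next
      fix a :: sv_elem and w k assume "w \<in> W"
      obtain qL qM qY qN where a: "a = (qL, qM, qY, qN)" by (cases a) auto
      have "act_V \<alpha> \<beta> \<Delta> a w = smult [:\<alpha>, 1:] (neg_lam qL * shift_poly w)"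
        proof -
        have "act_V \<alpha> \<beta> \<Delta> a w = neg_lam qL * (shift_poly w * [:[:\<alpha>, 1:]:])"
          using z by (simp add: a act_V_def act_L_def act_N_def)
        also have "shift_poly w * [:[:\<alpha>, 1:]:] = smult [:\<alpha>, 1:] (shift_poly w)"
          by (simp add: mult.commute[of _ "[:_:]"])
        finally show ?thesis by simp
      qed
      then have "coeff (act_V \<alpha> \<beta> \<Delta> a w) k = coeff (neg_lam qL * shift_poly w) k * [:\<alpha>, 1:]"
        by (simp only: coeff_smult mult.commute)
      then show "coeff (act_V \<alpha> \<beta> \<Delta> a w) k \<in> W" unfolding W_def by blast
    qed
    have "[:\<alpha>, 1:] \<in> W" unfolding W_def by (auto intro: exI[of _ 1])
    then have "W \<noteq> {0}" by auto
    moreover have "1 \<notin> W"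
    proof
      assume "1 \<in> W"
      then obtain q where "1 = q * [:\<alpha>, 1:]" unfolding W_def by auto
      moreover have "q \<noteq> 0" using calculation by (cases "q = 0") simp_all
      ultimately have "degree (1::complex poly) = degree q + degree [:\<alpha>, 1:]"
        using degree_mult_eq[of q "[:\<alpha>, 1:]"] by simp
      then show False by simp
    qed
    ultimately show False using irr sub unfolding irreducible_V_def by auto
  qed
next
  assume nz: "\<Delta> \<noteq> 0 \<or> \<beta> \<noteq> 0"
  show "irreducible_V \<alpha> \<beta> \<Delta>"
    unfolding irreducible_V_def
  proof (intro allI impI)
    fix W assume sub: "is_submodule_V \<alpha> \<beta> \<Delta> W"
    show "W = {0} \<or> W = UNIV"
    proof (cases "\<exists>w\<in>W. w \<noteq> 0")
      case True
      then obtain w where "w \<in> W" "w \<noteq> 0" by auto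
      then have "1 \<in> W" using one_in sub nz by blast
      then have "\<forall>q. q * 1 \<in> W" using sub unfolding is_submodule_V_def by blast
      then show ?thesis by auto
    next
      case False
      then show ?thesis using sub unfolding is_submodule_V_def by auto
    qed
  qed
qed

end
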